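(* Let $\mathcal H$ be a Hilbert space, $(M_n)$ a sequence of bounded operators on $\mathcal H$, and $(L_n)$ subspaces of $\mathcal H$ such that: $(M_n)$ is uniformly bounded; $L_n$ is invariant under $M_n$; and for every sequence $(g_n)$ with $g_n\in L_n$, $\|g_n\|\le1$, the sequence $(M_ng_n)$ is relatively compact in $\mathcal H$. Assume $M_n\to M$ strongly for some bounded operator $M$ on $\mathcal H$, and that there are vectors $g_n\in L_n$ with $\|g_n\|=1$ and scalars $\lambda_n$ with $M_ng_n=\lambda_ng_n$. Then any non-zero cluster point $\lambda_0$ of $(\lambda_n)$ is an eigenvalue of $M$, and there is a subsequence of $(g_n)$ converging to a vector $g$ with $Mg=\lambda_0g$. *)

theory Defs
  imports "HOL-Analysis.Analysis"
begin

class complex_vector = real_vector +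
  fixes scaleC :: "complex \<Rightarrow> 'a \<Rightarrow> 'a"
  assumes scaleC_add_right: "scaleC a (x + y) = scaleC a x + scaleC a y"
    and scaleC_add_left: "scaleC (a + b) x = scaleC a x + scaleC b x"
    and scaleC_scaleC: "scaleC a (scaleC b x) = scaleC (a * b) x"
    and scaleC_one: "scaleC 1 x = x"
    and scaleR_scaleC: "scaleR r x = scaleC (complex_of_real r) x"

class complex_inner = complex_vector + real_normed_vector +
  fixes cinner :: "'a \<Rightarrow> 'a \<Rightarrow> complex"
  assumes cinner_commute: "cinner x y = cnj (cinner y x)"
    and cinner_add_left: "cinner (x + y) z = cinner x z + cinner y z"
    and cinner_scaleC_left: "cinner (scaleC r x) y = cnj r * cinner x y"
    and cinner_self_real: "Im (cinner x x) = 0"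
    and cinner_self_nonneg: "0 \<le> Re (cinner x x)"
    and cinner_self_eq_zero: "cinner x x = 0 \<longleftrightarrow> x = 0"
    and norm_eq_sqrt_cinner: "norm x = sqrt (Re (cinner x x))"

class chilbert_space = complex_inner + complete_space

definition bounded_clinear :: "('a::complex_inner \<Rightarrow> 'b::complex_inner) \<Rightarrow> bool" where
  "bounded_clinear f \<longleftrightarrow> bounded_linear f \<and> (\<forall>c x. f (scaleC c x) = scaleC c (f x))"

definition csubspace :: "'a::complex_vector set \<Rightarrow> bool" where
  "csubspace S \<longleftrightarrow> 0 \<in> S \<and> (\<forall>x\<in>S. \<forall>y\<in>S. x + y \<in> S) \<and> (\<forall>c. \<forall>x\<in>S. scaleC c x \<in> S)"

definition ceigenvalue :: "('a::complex_vector \<Rightarrow> 'a) \<Rightarrow> complex \<Rightarrow> bool" where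
  "ceigenvalue T l \<longleftrightarrow> (\<exists>v. v \<noteq> 0 \<and> T v = scaleC l v)"

definition cluster_point :: "(nat \<Rightarrow> 'a::metric_space) \<Rightarrow> 'a \<Rightarrow> bool" where
  "cluster_point s a \<longleftrightarrow> (\<forall>e>0. infinite {n. dist (s n) a < e})"

end

theory Submission
  imports Defs
begin

lemma cinner_scaleC_right_aux:
  "cinner x (scaleC c (y::'a::complex_inner)) = c * cinner x y"
  by (metis cinner_commute cinner_scaleC_left complex_cnj_cnj complex_cnj_mult)

lemma norm_scaleC_aux: "norm (scaleC c (x::'a::complex_inner)) = cmod c * norm x"
proof -
  have "cinner (scaleC c x) (scaleC c x) = cnj c * c * cinner x x"
    by (simp add: cinner_scaleC_left cinner_scaleC_right_aux)
  also have "cinner x x = complex_of_real (Re (cinner x x))"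
    using cinner_self_real[of x] by (simp add: complex_eq_iff)
  also have "cnj c * c = complex_of_real ((cmod c)^2)"
    by (metis complex_norm_square mult.commute)
  finally have "Re (cinner (scaleC c x) (scaleC c x)) = (cmod c)^2 * Re (cinner x x)"
    by (metis Re_complex_of_real of_real_mult)
  then show ?thesis
    by (simp add: norm_eq_sqrt_cinner real_sqrt_mult)
qed

lemma bb_scaleC: "bounded_bilinear (scaleC :: complex \<Rightarrow> 'a::complex_inner \<Rightarrow> 'a)"
proof
  fix a a' :: complex and b b' :: 'a and r :: real
  show "scaleC (a + a') b = scaleC a b + scaleC a' b" by (rule scaleC_add_left)
  show "scaleC a (b + b') = scaleC a b + scaleC a b'" by (rule scaleC_add_right)
  show "scaleC (r *\<^sub>R a) b = r *\<^sub>R scaleC a b"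
    by (simp add: scaleR_scaleC scaleC_scaleC scaleR_conv_of_real)
  show "scaleC a (r *\<^sub>R b) = r *\<^sub>R scaleC a b"
    by (simp add: scaleR_scaleC scaleC_scaleC mult.commute)
next
  show "\<exists>K. \<forall>a b. norm (scaleC a (b::'a)) \<le> norm a * norm b * K"
    by (rule exI[of _ 1]) (simp add: norm_scaleC_aux)
qed

lemma cluster_subseq:
  fixes lam :: "nat \<Rightarrow> 'b::metric_space"
  assumes "cluster_point lam l"
  shows "\<exists>r. strict_mono r \<and> (lam \<circ> r) \<longlonglongrightarrow> l"
proof -
  have ex: "\<exists>n. n > m \<and> dist (lam n) l < inverse (real k + 1)" for k m
  proof -
    have "infinite {n. dist (lam n) l < inverse (real k + 1)}"
      using assms unfolding cluster_point_def by auto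
    then show ?thesis by (simp add: infinite_nat_iff_unbounded)
  qed
  define f where "f k m = (SOME n. n > m \<and> dist (lam n) l < inverse (real k + 1))" for k m
  have f: "f k m > m \<and> dist (lam (f k m)) l < inverse (real k + 1)" for k m
    unfolding f_def by (rule someI_ex[OF ex])
  define r where "r = rec_nat (f 0 0) (\<lambda>k x. f (Suc k) x)"
  have r0: "r 0 = f 0 0" and rS: "r (Suc k) = f (Suc k) (r k)" for k
    by (simp_all add: r_def)
  have sm: "strict_mono r"
    unfolding strict_mono_Suc_iff using f rS by simp
  have d: "dist (lam (r k)) l < inverse (real k + 1)" for k
  proof (cases k)
    case 0 then show ?thesis using f[of 0 0] r0 by simp
  next
    case (Suc n) then show ?thesis using f[of "r n" "Suc n"] rS[of n] by simp
  qed
  have "(lam \<circ> r) \<longlonglongrightarrow> l"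
  proof (rule metric_LIMSEQ_I)
    fix e :: real assume "e > 0"
    then obtain N :: nat where N: "inverse (real N + 1) < e"
      by (metis reals_Archimedean add.commute inverse_less_iff_less of_nat_Suc
            less_trans of_nat_0_less_iff zero_less_Suc)
    show "\<exists>no. \<forall>n\<ge>no. dist ((lam \<circ> r) n) l < e"
    proof (intro exI allI impI)
      fix n assume "n \<ge> N"
      then have "inverse (real n + 1) \<le> inverse (real N + 1)"
        by (simp add: le_imp_inverse_le)
      with d[of n] N show "dist ((lam \<circ> r) n) l < e" unfolding o_def by linarith
    qed
  qed
  with sm show ?thesis by blast
qed

theorem mainTheorem3:
  fixes Ms :: "nat \<Rightarrow> 'a::chilbert_space \<Rightarrow> 'a"
    and M :: "'a \<Rightarrow> 'a"
    and L :: "nat \<Rightarrow> 'a set"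
    and g :: "nat \<Rightarrow> 'a"
    and lam :: "nat \<Rightarrow> complex"
    and lam0 :: complex
  assumes bounded_ops: "\<And>n. bounded_clinear (Ms n)"
    and unif_bounded: "\<exists>C. \<forall>n x. norm (Ms n x) \<le> C * norm x"
    and subsp: "\<And>n. csubspace (L n)"
    and invariant: "\<And>n. Ms n ` L n \<subseteq> L n"
    and rel_compact: "\<And>h. (\<forall>n. h n \<in> L n \<and> norm (h n) \<le> 1) \<Longrightarrow>
                        compact (closure (range (\<lambda>n. Ms n (h n))))"
    and M_bounded: "bounded_clinear M"
    and strong_conv: "\<And>x. (\<lambda>n. Ms n x) \<longlonglongrightarrow> M x"
    and g_in: "\<And>n. g n \<in> L n"
    and g_norm: "\<And>n. norm (g n) = 1"
    and eigen: "\<And>n. Ms n (g n) = scaleC (lam n) (g n)"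
    and cluster: "cluster_point lam lam0"
    and nonzero: "lam0 \<noteq> 0"
  shows "ceigenvalue M lam0 \<and>
         (\<exists>r g0. strict_mono r \<and> (g \<circ> r) \<longlonglongrightarrow> g0 \<and> M g0 = scaleC lam0 g0)"
proof -
  interpret sc: bounded_bilinear "scaleC :: complex \<Rightarrow> 'a \<Rightarrow> 'a" by (rule bb_scaleC)
  obtain C where C: "\<And>n x. norm (Ms n x) \<le> C * norm x" using unif_bounded by blast
  obtain r1 where r1: "strict_mono r1" "(lam \<circ> r1) \<longlonglongrightarrow> lam0"
    using cluster_subseq[OF cluster] by blast
  define K where "K = closure (range (\<lambda>n. Ms n (g n)))"
  have "compact K" unfolding K_def by (rule rel_compact) (simp add: g_in g_norm)
  then have "seq_compact K" by (rule compact_imp_seq_compact)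
  moreover have "\<forall>n. Ms (r1 n) (g (r1 n)) \<in> K"
    unfolding K_def by (simp add: closure_subset[THEN subsetD])
  ultimately obtain y r2 where r2: "strict_mono r2"
    "((\<lambda>n. Ms (r1 n) (g (r1 n))) \<circ> r2) \<longlonglongrightarrow> y"
    by (rule seq_compactE) blast
  define r where "r = r1 \<circ> r2"
  have r: "strict_mono r" unfolding r_def using r1 r2 by (simp add: strict_mono_o)
  have lr: "(\<lambda>n. lam (r n)) \<longlonglongrightarrow> lam0"
    using LIMSEQ_subseq_LIMSEQ[OF r1(2) r2(1)] by (simp add: r_def o_def)
  have yr: "(\<lambda>n. Ms (r n) (g (r n))) \<longlonglongrightarrow> y"
    using r2(2) by (simp add: r_def o_def)
  have ilr: "(\<lambda>n. inverse (lam (r n))) \<longlonglongrightarrow> inverse lam0"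
    using tendsto_inverse[OF lr nonzero] .
  define g0 where "g0 = scaleC (inverse lam0) y"
  have ev: "eventually (\<lambda>n. lam (r n) \<noteq> 0) sequentially"
    by (rule tendsto_imp_eventually_ne[OF lr nonzero])
  have eq: "eventually (\<lambda>n. scaleC (inverse (lam (r n))) (Ms (r n) (g (r n))) = g (r n)) sequentially"
  proof (rule eventually_mono[OF ev])
    fix n assume "lam (r n) \<noteq> 0"
    then show "scaleC (inverse (lam (r n))) (Ms (r n) (g (r n))) = g (r n)"
      unfolding eigen scaleC_scaleC by (simp add: scaleC_one)
  qed
  have gr: "(\<lambda>n. g (r n)) \<longlonglongrightarrow> g0"
    using Lim_transform_eventually[OF sc.tendsto[OF ilr yr] eq] unfolding g0_def .
  have "(\<lambda>n. norm (g (r n))) \<longlonglongrightarrow> norm g0" by (rule tendsto_norm[OF gr])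
  then have "(\<lambda>n. 1::real) \<longlonglongrightarrow> norm g0" by (simp add: g_norm)
  then have "norm g0 = 1" by (simp add: LIMSEQ_const_iff)
  then have g0nz: "g0 \<noteq> 0" by auto
  have lin: "bounded_linear (Ms n)" for n using bounded_ops[of n] by (simp add: bounded_clinear_def)
  have "(\<lambda>n. Ms (r n) (g (r n)) - Ms (r n) g0) \<longlonglongrightarrow> 0"
  proof (rule tendsto_norm_zero_cancel, rule Lim_null_comparison)
    show "\<forall>\<^sub>F n in sequentially. norm (norm (Ms (r n) (g (r n)) - Ms (r n) g0)) \<le> C * norm (g (r n) - g0)"
    proof (rule always_eventually, rule allI)
      fix n
      have "Ms (r n) (g (r n)) - Ms (r n) g0 = Ms (r n) (g (r n) - g0)"
        using linear_diff[OF bounded_linear.linear[OF lin[of "r n"]]] by simp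
      then show "norm (norm (Ms (r n) (g (r n)) - Ms (r n) g0)) \<le> C * norm (g (r n) - g0)"
        using C[of "r n" "g (r n) - g0"] by simp
    qed
    show "(\<lambda>n. C * norm (g (r n) - g0)) \<longlonglongrightarrow> 0"
      using tendsto_mult_right_zero[OF tendsto_norm_zero[OF LIM_zero[OF gr]]] .
  qed
  from tendsto_diff[OF yr this] have "(\<lambda>n. Ms (r n) g0) \<longlonglongrightarrow> y" by simp
  moreover have "(\<lambda>n. Ms (r n) g0) \<longlonglongrightarrow> M g0"
    using LIMSEQ_subseq_LIMSEQ[OF strong_conv r] by (simp add: o_def)
  ultimately have "M g0 = y" using LIMSEQ_unique by blast
  have Mg0: "M g0 = scaleC lam0 g0"
  proof -
    have "scaleC lam0 g0 = y"
      unfolding g0_def scaleC_scaleC using nonzero by (simp add: scaleC_one)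
    with \<open>M g0 = y\<close> show ?thesis by simp
  qed
  have "(g \<circ> r) \<longlonglongrightarrow> g0" using gr by (simp add: o_def)
  then show ?thesis
    using Mg0 g0nz r unfolding ceigenvalue_def by blast
qed

end
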